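(* With $\overline{C}(\alpha)$ as defined in the context, $\overline{C}(1)=\dfrac{\pi^2}{3}$.
   Context: For a strictly increasing sequence $(\lambda_k)_{k=-\infty}^{\infty}$ of real numbers, put $\delta_k:=\min\{\lambda_k-\lambda_{k-1},\lambda_{k+1}-\lambda_k\}$. For $0\le\alpha\le2$, let $\overline{C}(\alpha)$ be the minimum of all constants $C(\alpha)$ such that $$\sum_{m=1}^N\sum_{\substack{n=1\\ n\ne m}}^N\frac{\delta_m^{2-\alpha}\delta_n^{\alpha}t_mt_n}{(\lambda_m-\lambda_n)^2}\le C(\alpha)\sum_{n=1}^N t_n^2$$ holds for every positive integer $N$, every strictly increasing real sequence $(\lambda_k)_{k\in\mathbb Z}$ and all nonnegative reals $t_1,\dots,t_N$; set $\overline{C}(\alpha)=\infty$ if no such real constant exists. *)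

theory Defs
  imports "HOL-Analysis.Analysis"
begin

definition gap :: "(int \<Rightarrow> real) \<Rightarrow> int \<Rightarrow> real" where
  "gap lam k = min (lam k - lam (k - 1)) (lam (k + 1) - lam k)"

definition admissible_const :: "real \<Rightarrow> real \<Rightarrow> bool" where
  "admissible_const \<alpha> C \<longleftrightarrow>
     (\<forall>(N::nat) (lam::int \<Rightarrow> real) (t::nat \<Rightarrow> real).
        N \<ge> 1 \<longrightarrow> strict_mono lam \<longrightarrow> (\<forall>n\<in>{1..N}. 0 \<le> t n) \<longrightarrow>
        (\<Sum>m\<in>{1..N}. \<Sum>n\<in>{1..N} - {m}.
            gap lam (int m) powr (2 - \<alpha>) * gap lam (int n) powr \<alpha> * t m * t n
            / (lam (int m) - lam (int n))^2)
        \<le> C * (\<Sum>n\<in>{1..N}. (t n)^2))"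

text \<open>Infimum over all admissible real constants, in the extended reals;
  equals infinity when no real constant works (Inf of the empty set).\<close>
definition Cbar :: "real \<Rightarrow> ereal" where
  "Cbar \<alpha> = Inf (ereal ` {C. admissible_const \<alpha> C})"

end

theory Submission
  imports Defs "HOL-Probability.Distributions"
begin


lemma E1:
  assumes t: "(t::real) > 0"
  shows "(\<integral>\<^sup>+x. ennreal (x * exp (-(t*x))) * indicator {0..} x \<partial>lborel) = ennreal (1/t^2)"
proof -
  let ?I = "(\<integral>\<^sup>+x. ennreal (x * exp (-(t*x))) * indicator {0..} x \<partial>lborel)"
  have pw: "ennreal ((0 + t*x)^1 * exp (-(0 + t*x))) * indicator {0 ..} (0 + t*x) = ennreal t * (ennreal (x * exp (-(t*x))) * indicator {0..} x)" for x
  proof (cases "x \<ge> 0")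
    case True
    then show ?thesis using t by (simp add: ennreal_mult[symmetric] mult.assoc)
  next
    case False
    then have "\<not> 0 \<le> t*x" using t by (simp add: zero_le_mult_iff)
    then show ?thesis using False by simp
  qed
  have "ennreal 1 = (\<integral>\<^sup>+x. ennreal (x^1 * exp (-x)) * indicator {0 ..} x \<partial>lborel)"
    using nn_intergal_power_times_exp_Ici[of 1] by simp
  also have "\<dots> = \<bar>t\<bar> * (\<integral>\<^sup>+x. ennreal ((0 + t*x)^1 * exp (-(0 + t*x))) * indicator {0 ..} (0 + t*x) \<partial>lborel)"
    by (rule nn_integral_real_affine) (use t in auto)
  also have "\<dots> = ennreal t * (\<integral>\<^sup>+x. ennreal t * (ennreal (x * exp (-(t*x))) * indicator {0..} x) \<partial>lborel)"
    using t by (simp only: pw) simp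
  also have "\<dots> = ennreal (t^2) * ?I"
    using t by (subst nn_integral_cmult) (auto simp: power2_eq_square ennreal_mult' mult.assoc)
  finally have 1: "ennreal 1 = ennreal (t^2) * ?I" .
  have "?I = ennreal (1/t^2) * (ennreal (t^2) * ?I)"
    using t by (simp add: ennreal_mult'[symmetric] mult.assoc[symmetric])
  also have "\<dots> = ennreal (1/t^2)" using 1[symmetric] by simp
  finally show ?thesis .
qed



definition P :: "real \<Rightarrow> real \<Rightarrow> ennreal" where
  "P u h = (\<Sum>j. ennreal (h / (u + real j * h)^2))"

definition Q :: "real \<Rightarrow> real \<Rightarrow> real \<Rightarrow> real" where
  "Q u h x = h * x * exp (-(u*x)) / (1 - exp (-(h*x)))"

lemma Q_pw:
  assumes u: "u > 0" and h: "h > 0" and x: "x \<ge> 0"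
  shows "(\<Sum>j. ennreal (h * x * exp (-((u + real j * h) * x)))) = ennreal (Q u h x)"
proof (cases "x = 0")
  case True
  then show ?thesis by (simp add: Q_def)
next
  case False
  with x have x: "x > 0" by simp
  let ?c = "exp (-(h*x))"
  have c: "?c < 1" "0 \<le> ?c" using h x by auto
  have "(\<lambda>n. ?c ^ n) sums (1 / (1 - ?c))" using geometric_sums[of ?c] c by simp
  then have "(\<lambda>n. (h * x * exp (-(u*x))) * ?c ^ n) sums ((h * x * exp (-(u*x))) * (1 / (1 - ?c)))"
    by (rule sums_mult)
  moreover have "(h * x * exp (-(u*x))) * ?c ^ n = h * x * exp (-((u + real n * h) * x))" for n
    by (simp add: exp_of_nat_mult[symmetric] exp_add[symmetric] algebra_simps)
  ultimately have "(\<lambda>n. h * x * exp (-((u + real n * h) * x))) sums Q u h x"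
    by (simp add: Q_def)
  then show ?thesis
    by (intro suminf_ennreal_eq) (use h x in auto)
qed

lemma P_lap:
  assumes u: "u > 0" and h: "h > 0"
  shows "P u h = (\<integral>\<^sup>+x. ennreal (Q u h x) * indicator {0..} x \<partial>lborel)"
proof -
  have pos: "u + real j * h > 0" for j using u h by (simp add: add_pos_nonneg)
  have "P u h = (\<Sum>j. ennreal h * ennreal (1 / (u + real j * h)^2))"
    unfolding P_def using h by (simp add: ennreal_mult[symmetric])
  also have "\<dots> = (\<Sum>j. ennreal h * (\<integral>\<^sup>+x. ennreal (x * exp (-((u + real j * h)*x))) * indicator {0..} x \<partial>lborel))"
    using E1[OF pos] by simp
  also have "\<dots> = (\<Sum>j. (\<integral>\<^sup>+x. ennreal (h * x * exp (-((u + real j * h)*x))) * indicator {0..} x \<partial>lborel))"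
  proof (intro suminf_cong)
    fix j
    have "ennreal h * (\<integral>\<^sup>+x. ennreal (x * exp (-((u + real j * h)*x))) * indicator {0..} x \<partial>lborel)
      = (\<integral>\<^sup>+x. ennreal h * (ennreal (x * exp (-((u + real j * h)*x))) * indicator {0..} x) \<partial>lborel)"
      by (rule nn_integral_cmult[symmetric]) simp
    also have "\<dots> = (\<integral>\<^sup>+x. ennreal (h * x * exp (-((u + real j * h)*x))) * indicator {0..} x \<partial>lborel)"
      by (intro nn_integral_cong) (use h in \<open>auto simp: indicator_def ennreal_mult[symmetric] mult.assoc\<close>)
    finally show "ennreal h * (\<integral>\<^sup>+x. ennreal (x * exp (-((u + real j * h)*x))) * indicator {0..} x \<partial>lborel)
      = (\<integral>\<^sup>+x. ennreal (h * x * exp (-((u + real j * h)*x))) * indicator {0..} x \<partial>lborel)" .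
  qed
  also have "\<dots> = (\<integral>\<^sup>+x. (\<Sum>j. ennreal (h * x * exp (-((u + real j * h)*x))) * indicator {0..} x) \<partial>lborel)"
    by (rule nn_integral_suminf[symmetric]) measurable
  also have "\<dots> = (\<integral>\<^sup>+x. ennreal (Q u h x) * indicator {0..} x \<partial>lborel)"
  proof (intro nn_integral_cong)
    fix x :: real
    show "(\<Sum>j. ennreal (h * x * exp (-((u + real j * h)*x))) * indicator {0..} x) = ennreal (Q u h x) * indicator {0..} x"
    proof (cases "x \<ge> 0")
      case True
      then show ?thesis using Q_pw[OF u h True] by simp
    next
      case False
      then show ?thesis by simp
    qed
  qed
  finally show ?thesis .
qed



lemma e_conv:
  fixes a b c :: real
  assumes "0 < a" "a \<le> b"
  shows "exp (a/b * c) \<le> 1 - a/b + a/b * exp c"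
proof -
  have b: "b > 0" using assms by simp
  have "exp ((1 - a/b) *\<^sub>R 0 + (a/b) *\<^sub>R c) \<le> (1 - a/b) * exp 0 + (a/b) * exp c"
    by (rule convex_onD[OF exp_convex]) (use assms b in auto)
  then show ?thesis by simp
qed

lemma e1:
  fixes a b :: real
  assumes "0 < a" "a \<le> b"
  shows "a * (1 - exp (-b)) \<le> b * (1 - exp (-a))"
proof -
  have b: "b > 0" using assms by simp
  have "exp (a/b * (-b)) \<le> 1 - a/b + a/b * exp (-b)" by (rule e_conv) (use assms in auto)
  moreover have "a/b * (-b) = -a" using b by simp
  ultimately have "exp (-a) \<le> 1 - a/b + a/b * exp (-b)" by simp
  then have "b * exp (-a) \<le> b * (1 - a/b + a/b * exp (-b))" using b by simp
  also have "\<dots> = b - a + a * exp (-b)" using b by (simp add: field_simps)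
  finally show ?thesis by (simp add: algebra_simps)
qed

lemma e2:
  fixes a b :: real
  assumes "0 < a" "a \<le> b"
  shows "b * (exp a - 1) \<le> a * (exp b - 1)"
proof -
  have b: "b > 0" using assms by simp
  have "exp (a/b * b) \<le> 1 - a/b + a/b * exp b" by (rule e_conv) (use assms in auto)
  moreover have "a/b * b = a" using b by simp
  ultimately have "exp a \<le> 1 - a/b + a/b * exp b" by simp
  then have "b * exp a \<le> b * (1 - a/b + a/b * exp b)" using b by simp
  also have "\<dots> = b - a + a * exp b" using b by (simp add: field_simps)
  finally show ?thesis by (simp add: algebra_simps)
qed

lemma QA:
  assumes u: "u > 0" and h: "0 < h'" "h' \<le> h" and x: "x \<ge> 0"
  shows "Q u h' x \<le> Q u h x"
proof (cases "x = 0")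
  case True then show ?thesis by (simp add: Q_def)
next
  case False
  with x have x: "x > 0" by simp
  have hp: "h > 0" using h by simp
  have d1: "1 - exp (-(h'*x)) > 0" using h x by simp
  have d2: "1 - exp (-(h*x)) > 0" using hp x by simp
  have "h'*x * (1 - exp (-(h*x))) \<le> h*x * (1 - exp (-(h'*x)))"
    by (rule e1) (use h x in \<open>auto intro: mult_right_mono\<close>)
  then have k: "h' * (1 - exp (-(h*x))) \<le> h * (1 - exp (-(h'*x)))" using x
    by (simp add: mult.commute mult.left_commute)
  have "h' / (1 - exp (-(h'*x))) \<le> h / (1 - exp (-(h*x)))"
    using k d1 d2 by (simp add: divide_simps mult.commute)
  then have "(x * exp (-(u*x))) * (h' / (1 - exp (-(h'*x)))) \<le> (x * exp (-(u*x))) * (h / (1 - exp (-(h*x))))"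
    using x by (intro mult_left_mono) auto
  then show ?thesis by (simp add: Q_def mult.commute mult.left_commute)
qed

lemma QB:
  assumes X: "X \<ge> 0" and h: "0 < h" "h \<le> h'" and x: "x \<ge> 0"
  shows "Q (X + h') h' x \<le> Q (X + h) h x"
proof (cases "x = 0")
  case True then show ?thesis by (simp add: Q_def)
next
  case False
  with x have x: "x > 0" by simp
  have hp: "h' > 0" using h by simp
  have r: "Q (X + g) g x = g * x * exp (-(X*x)) / (exp (g*x) - 1)" if g: "g > 0" for g
  proof -
    have d: "1 - exp (-(g*x)) > 0" "exp (g*x) - 1 > 0" using g x by auto
    have "exp (-((X+g)*x)) = exp (-(X*x)) * exp (-(g*x))" by (simp add: exp_add[symmetric] algebra_simps)
    moreover have "exp (-(g*x)) * exp (g*x) = 1" by (simp add: exp_add[symmetric])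
    ultimately show ?thesis using d unfolding Q_def
      by (simp add: divide_simps) (simp add: algebra_simps)
  qed
  have d1: "exp (h'*x) - 1 > 0" using hp x by simp
  have d2: "exp (h*x) - 1 > 0" using h x by simp
  have "h'*x * (exp (h*x) - 1) \<le> h*x * (exp (h'*x) - 1)"
    by (rule e2) (use h x in \<open>auto intro: mult_right_mono\<close>)
  then have k: "h' * (exp (h*x) - 1) \<le> h * (exp (h'*x) - 1)" using x
    by (simp add: mult.commute mult.left_commute)
  have "h' / (exp (h'*x) - 1) \<le> h / (exp (h*x) - 1)"
    using k d1 d2 by (simp add: divide_simps mult.commute)
  then have "(x * exp (-(X*x))) * (h' / (exp (h'*x) - 1)) \<le> (x * exp (-(X*x))) * (h / (exp (h*x) - 1))"
    using x by (intro mult_left_mono) auto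
  then show ?thesis using r[OF hp] r[OF h(1)] by (simp add: mult.commute mult.left_commute)
qed

lemma PA:
  assumes u: "u > 0" and h: "0 < h'" "h' \<le> h"
  shows "P u h' \<le> P u h"
proof -
  have "P u h' = (\<integral>\<^sup>+x. ennreal (Q u h' x) * indicator {0..} x \<partial>lborel)"
    by (rule P_lap) (use u h in auto)
  also have "\<dots> \<le> (\<integral>\<^sup>+x. ennreal (Q u h x) * indicator {0..} x \<partial>lborel)"
    using QA[OF u h] by (intro nn_integral_mono) (auto simp: indicator_def ennreal_leI)
  also have "\<dots> = P u h"
    by (rule P_lap[symmetric]) (use u h in auto)
  finally show ?thesis .
qed

lemma PB:
  assumes X: "X \<ge> 0" and h: "0 < h" "h \<le> h'"
  shows "P (X + h') h' \<le> P (X + h) h"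
proof -
  have "P (X + h') h' = (\<integral>\<^sup>+x. ennreal (Q (X + h') h' x) * indicator {0..} x \<partial>lborel)"
    by (rule P_lap) (use X h in auto)
  also have "\<dots> \<le> (\<integral>\<^sup>+x. ennreal (Q (X + h) h x) * indicator {0..} x \<partial>lborel)"
    using QB[OF X h] by (intro nn_integral_mono) (auto simp: indicator_def ennreal_leI)
  also have "\<dots> = P (X + h) h"
    by (rule P_lap[symmetric]) (use X h in auto)
  finally show ?thesis .
qed



lemma P_head:
  assumes u: "u > 0" and h: "h > 0"
  shows "P u h = ennreal (h / u^2) + P (u + h) h"
proof -
  let ?f = "\<lambda>j. ennreal (h / (u + real j * h)^2)"
  have "suminf ?f = (\<Sum>j. ?f (j + 1)) + (\<Sum>j<1. ?f j)"
    by (rule suminf_offset) (rule summableI)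
  moreover have "?f (j + 1) = ennreal (h / (u + h + real j * h)^2)" for j
    by (simp add: algebra_simps)
  ultimately show ?thesis unfolding P_def by (simp add: add.commute)
qed

lemma P_anti:
  assumes u: "0 < u" "u \<le> u'" and h: "h > 0"
  shows "P u' h \<le> P u h"
  unfolding P_def
proof (intro suminf_le summableI allI ennreal_leI)
  fix j
  have "0 < u + real j * h" using u h by (simp add: add_pos_nonneg)
  moreover have "u + real j * h \<le> u' + real j * h" using u by simp
  ultimately have "(u + real j * h)^2 \<le> (u' + real j * h)^2" by (intro power_mono) auto
  then show "h / (u' + real j * h)^2 \<le> h / (u + real j * h)^2"
    using h \<open>0 < u + real j * h\<close> by (intro frac_le) auto
qed

lemma P_zero:
  assumes h: "h > 0"
  shows "P h h = ennreal (pi^2 / 6 / h)"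
proof -
  have "(\<lambda>n. (1/h) * (1 / (real n + 1)^2)) sums ((1/h) * (pi^2 / 6))"
    by (rule sums_mult) (use inverse_squares_sums in \<open>simp add: add.commute\<close>)
  moreover have "(1/h) * (1 / (real n + 1)^2) = h / (h + real n * h)^2" for n
  proof -
    have "h + real n * h = h * (real n + 1)" by (simp add: algebra_simps)
    then show ?thesis using h by (simp add: power_mult_distrib power2_eq_square)
  qed
  ultimately have "(\<lambda>n. h / (h + real n * h)^2) sums (pi^2 / 6 / h)" by (simp add: mult.commute)
  then show ?thesis unfolding P_def by (intro suminf_ennreal_eq) (use h in auto)
qed

lemma core:
  fixes a d :: "nat \<Rightarrow> real"
  assumes a0: "a 0 = 0" and dpos: "\<And>k. d k > 0"
    and step: "\<And>k. a (Suc k) \<ge> a k + max (d k) (d (Suc k))"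
  shows "(\<Sum>k\<in>{1..M}. ennreal (d k / (a k)^2)) + P (a M + d M) (d M) \<le> P (d 0) (d 0)"
proof (induction M)
  case 0
  then show ?case using a0 by simp
next
  case (Suc M)
  have anonneg: "a k \<ge> 0" for k
  proof (induction k)
    case 0 then show ?case using a0 by simp
  next
    case (Suc k) then show ?case using step[of k] dpos[of k] by linarith
  qed
  define x where "x = a M"
  define e where "e = d M"
  define e' where "e' = d (Suc M)"
  define x' where "x' = a (Suc M)"
  define Y where "Y = x + max e e'"
  have e: "e > 0" "e' > 0" using dpos by (auto simp: e_def e'_def)
  have x: "x \<ge> 0" using anonneg by (simp add: x_def)
  have Yx': "Y \<le> x'" using step[of M] by (simp add: Y_def x_def x'_def e_def e'_def)
  have Ypos: "Y > 0" using x e by (simp add: Y_def add_nonneg_pos max_def)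
  have "ennreal (e' / x'^2) + P (x' + e') e' \<le> ennreal (e' / Y^2) + P (Y + e') e'"
  proof (intro add_mono ennreal_leI P_anti)
    have "Y^2 \<le> x'^2" using Yx' Ypos by (intro power_mono) auto
    then show "e' / x'^2 \<le> e' / Y^2" using e Ypos by (intro frac_le) auto
  qed (use Yx' Ypos e in auto)
  also have "\<dots> = P Y e'" using P_head[OF Ypos e(2)] by simp
  also have "\<dots> \<le> P (x + e) e"
  proof (cases "e' \<le> e")
    case True
    then have "Y = x + e" by (simp add: Y_def)
    then show ?thesis using PA[of "x + e" e' e] True e x by simp
  next
    case False
    then have "Y = x + e'" by (simp add: Y_def)
    then show ?thesis using PB[OF x e(1), of e'] False by simp
  qed
  finally have st: "ennreal (e' / x'^2) + P (x' + e') e' \<le> P (x + e) e" .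
  have "(\<Sum>k\<in>{1..Suc M}. ennreal (d k / (a k)^2)) + P (a (Suc M) + d (Suc M)) (d (Suc M))
      = (\<Sum>k\<in>{1..M}. ennreal (d k / (a k)^2)) + (ennreal (e' / x'^2) + P (x' + e') e')"
    by (simp add: sum.cl_ivl_Suc e'_def x'_def add.assoc)
  also have "\<dots> \<le> (\<Sum>k\<in>{1..M}. ennreal (d k / (a k)^2)) + P (x + e) e"
    using st by (rule add_left_mono)
  also have "\<dots> \<le> P (d 0) (d 0)" using Suc.IH by (simp add: x_def e_def)
  finally show ?case .
qed

lemma core_real:
  fixes a d :: "nat \<Rightarrow> real"
  assumes a0: "a 0 = 0" and dpos: "\<And>k. d k > 0"
    and step: "\<And>k. a (Suc k) \<ge> a k + max (d k) (d (Suc k))"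
  shows "(\<Sum>k\<in>{1..M}. d 0 * d k / (a k)^2) \<le> pi^2 / 6"
proof -
  have "ennreal (\<Sum>k\<in>{1..M}. d k / (a k)^2) = (\<Sum>k\<in>{1..M}. ennreal (d k / (a k)^2))"
    using dpos by (subst sum_ennreal) (auto simp: less_imp_le)
  also have "\<dots> \<le> (\<Sum>k\<in>{1..M}. ennreal (d k / (a k)^2)) + P (a M + d M) (d M)"
    by simp
  also have "\<dots> \<le> P (d 0) (d 0)" by (rule core[OF assms])
  also have "\<dots> = ennreal (pi^2 / 6 / d 0)" by (rule P_zero[OF dpos])
  finally have "(\<Sum>k\<in>{1..M}. d k / (a k)^2) \<le> pi^2 / 6 / d 0"
    using dpos[of 0] by (subst (asm) ennreal_le_iff) auto
  then have "d 0 * (\<Sum>k\<in>{1..M}. d k / (a k)^2) \<le> d 0 * (pi^2 / 6 / d 0)"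
    using dpos[of 0] by (intro mult_left_mono) auto
  then show ?thesis using dpos[of 0] by (simp add: sum_distrib_left mult.assoc)
qed



lemma gap_pos: "strict_mono lam \<Longrightarrow> gap lam k > 0"
  unfolding gap_def by (auto simp: strict_mono_def)

lemma gap_le_right: "gap lam k \<le> lam (k + 1) - lam k"
  unfolding gap_def by simp

lemma gap_le_left: "gap lam k \<le> lam k - lam (k - 1)"
  unfolding gap_def by simp

lemma right_sum:
  assumes lam: "strict_mono (lam :: int \<Rightarrow> real)"
  shows "(\<Sum>k\<in>{1..M}. gap lam m * gap lam (m + int k) / (lam (m + int k) - lam m)^2) \<le> pi^2 / 6"
proof -
  define a where "a k = lam (m + int k) - lam m" for k :: nat
  define d where "d k = gap lam (m + int k)" for k :: nat
  have "(\<Sum>k\<in>{1..M}. d 0 * d k / (a k)^2) \<le> pi^2 / 6"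
  proof (rule core_real)
    show "a 0 = 0" by (simp add: a_def)
    show "\<And>k. d k > 0" by (simp add: d_def gap_pos[OF lam])
    fix k
    have 1: "d k \<le> a (Suc k) - a k"
      using gap_le_right[of lam "m + int k"] by (simp add: a_def d_def algebra_simps)
    have 2: "d (Suc k) \<le> a (Suc k) - a k"
      using gap_le_left[of lam "m + int (Suc k)"] by (simp add: a_def d_def add.assoc)
    show "a (Suc k) \<ge> a k + max (d k) (d (Suc k))" using 1 2 by simp
  qed
  then show ?thesis by (simp add: a_def d_def)
qed

lemma left_sum:
  assumes lam: "strict_mono (lam :: int \<Rightarrow> real)"
  shows "(\<Sum>k\<in>{1..M}. gap lam m * gap lam (m - int k) / (lam m - lam (m - int k))^2) \<le> pi^2 / 6"
proof -
  define lam' where "lam' k = - lam (- k)" for k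
  have sm: "strict_mono lam'" using lam unfolding strict_mono_def lam'_def by simp
  have g: "gap lam' k = gap lam (- k)" for k
    proof -
    have e: "- k - 1 = - 1 - k" by simp
    show ?thesis unfolding gap_def lam'_def by (simp add: algebra_simps min.commute e)
  qed
  have "(\<Sum>k\<in>{1..M}. gap lam' (-m) * gap lam' (-m + int k) / (lam' (-m + int k) - lam' (-m))^2) \<le> pi^2 / 6"
    by (rule right_sum[OF sm])
  then show ?thesis by (simp add: g lam'_def algebra_simps)
qed

lemma sum_minus_if:
  "finite A \<Longrightarrow> (\<Sum>n\<in>A - {m}. g n) = (\<Sum>n\<in>A. if n = m then 0 else g n)"
  by (rule sum.mono_neutral_cong_left) auto

lemma schur:
  fixes K :: "nat \<Rightarrow> nat \<Rightarrow> real"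
  assumes fin: "finite A" and sym: "\<And>m n. K m n = K n m" and nn: "\<And>m n. K m n \<ge> 0"
    and row: "\<And>m. m \<in> A \<Longrightarrow> (\<Sum>n\<in>A - {m}. K m n) \<le> C"
  shows "(\<Sum>m\<in>A. \<Sum>n\<in>A - {m}. K m n * t m * t n) \<le> C * (\<Sum>n\<in>A. (t n)^2)"
proof -
  have "(\<Sum>m\<in>A. \<Sum>n\<in>A - {m}. K m n * t m * t n) \<le> (\<Sum>m\<in>A. \<Sum>n\<in>A - {m}. K m n * ((t m)^2 + (t n)^2) / 2)"
  proof (intro sum_mono)
    fix m n
    have "t m * t n \<le> ((t m)^2 + (t n)^2) / 2"
      using zero_le_square[of "t m - t n"] by (simp add: power2_eq_square algebra_simps)
    then have "K m n * (t m * t n) \<le> K m n * (((t m)^2 + (t n)^2) / 2)"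
      using nn by (intro mult_left_mono) auto
    then show "K m n * t m * t n \<le> K m n * ((t m)^2 + (t n)^2) / 2" by (simp add: mult.assoc)
  qed
  also have "\<dots> = (\<Sum>m\<in>A. \<Sum>n\<in>A - {m}. K m n * (t m)^2) / 2 + (\<Sum>m\<in>A. \<Sum>n\<in>A - {m}. K m n * (t n)^2) / 2"
    by (simp add: sum.distrib sum_divide_distrib[symmetric] algebra_simps add_divide_distrib)
  also have "(\<Sum>m\<in>A. \<Sum>n\<in>A - {m}. K m n * (t n)^2) = (\<Sum>m\<in>A. \<Sum>n\<in>A - {m}. K m n * (t m)^2)"
  proof -
    have "(\<Sum>m\<in>A. \<Sum>n\<in>A - {m}. K m n * (t n)^2) = (\<Sum>m\<in>A. \<Sum>n\<in>A. if n = m then 0 else K m n * (t n)^2)"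
      using fin by (intro sum.cong[OF refl]) (simp add: sum_minus_if)
    also have "\<dots> = (\<Sum>n\<in>A. \<Sum>m\<in>A. if n = m then 0 else K m n * (t n)^2)"
      by (rule sum.swap)
    also have "\<dots> = (\<Sum>n\<in>A. \<Sum>m\<in>A - {n}. K n m * (t n)^2)"
      using fin by (intro sum.cong[OF refl]) (auto simp: sum_minus_if sym intro!: sum.cong)
    finally show ?thesis .
  qed
  also have "(\<Sum>m\<in>A. \<Sum>n\<in>A - {m}. K m n * (t m)^2) \<le> (\<Sum>m\<in>A. C * (t m)^2)"
  proof (intro sum_mono)
    fix m assume "m \<in> A"
    then have "(\<Sum>n\<in>A - {m}. K m n) * (t m)^2 \<le> C * (t m)^2"
      using row by (intro mult_right_mono) auto
    then show "(\<Sum>n\<in>A - {m}. K m n * (t m)^2) \<le> C * (t m)^2" by (simp add: sum_distrib_right)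
  qed
  finally show ?thesis by (simp add: sum_distrib_left)
qed



lemma row_bound:
  assumes lam: "strict_mono (lam :: int \<Rightarrow> real)" and m: "m \<in> {1..N}"
  shows "(\<Sum>n\<in>{1..N} - {m}. gap lam (int m) * gap lam (int n) / (lam (int m) - lam (int n))^2) \<le> pi^2 / 3"
proof -
  let ?f = "\<lambda>n::nat. gap lam (int m) * gap lam (int n) / (lam (int m) - lam (int n))^2"
  have split: "{1..N} - {m} = {1..<m} \<union> {Suc m..N}" using m by auto
  have R: "(\<Sum>n\<in>{Suc m..N}. ?f n) \<le> pi^2 / 6"
  proof -
    have "(\<Sum>n\<in>{Suc m..N}. ?f n) = (\<Sum>k\<in>{1..N - m}. gap lam (int m) * gap lam (int m + int k) / (lam (int m + int k) - lam (int m))^2)"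
    proof (rule sum.reindex_bij_witness[where j = "\<lambda>n. n - m" and i = "\<lambda>k. k + m"])
      fix n assume n: "n \<in> {Suc m..N}"
      then have "int m + int (n - m) = int n" by simp
      then show "gap lam (int m) * gap lam (int m + int (n - m)) / (lam (int m + int (n - m)) - lam (int m))^2 = ?f n"
        by (simp add: power2_commute)
    qed (use m in auto)
    also have "\<dots> \<le> pi^2 / 6" by (rule right_sum[OF lam])
    finally show ?thesis .
  qed
  have L: "(\<Sum>n\<in>{1..<m}. ?f n) \<le> pi^2 / 6"
  proof -
    have "(\<Sum>n\<in>{1..<m}. ?f n) = (\<Sum>k\<in>{1..m - 1}. gap lam (int m) * gap lam (int m - int k) / (lam (int m) - lam (int m - int k))^2)"
    proof (rule sum.reindex_bij_witness[where j = "\<lambda>n. m - n" and i = "\<lambda>k. m - k"])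
      fix n assume n: "n \<in> {1..<m}"
      then have "int m - int (m - n) = int n" by simp
      then show "gap lam (int m) * gap lam (int m - int (m - n)) / (lam (int m) - lam (int m - int (m - n)))^2 = ?f n"
        by simp
    qed (use m in auto)
    also have "\<dots> \<le> pi^2 / 6" by (rule left_sum[OF lam])
    finally show ?thesis .
  qed
  have "(\<Sum>n\<in>{1..N} - {m}. ?f n) = (\<Sum>n\<in>{1..<m}. ?f n) + (\<Sum>n\<in>{Suc m..N}. ?f n)"
    unfolding split by (rule sum.union_disjoint) auto
  also have "\<dots> \<le> pi^2/6 + pi^2/6" using L R by simp
  finally show ?thesis by simp
qed

lemma upper: "admissible_const 1 (pi^2 / 3)"
  unfolding admissible_const_def
proof (intro allI impI)
  fix N :: nat and lam :: "int \<Rightarrow> real" and t :: "nat \<Rightarrow> real"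
  assume "1 \<le> N" and lam: "strict_mono lam" and "\<forall>n\<in>{1..N}. 0 \<le> t n"
  define K where "K m n = gap lam (int m) * gap lam (int n) / (lam (int m) - lam (int n))^2" for m n :: nat
  have gp: "gap lam k > 0" for k using gap_pos[OF lam] .
  have "(\<Sum>m\<in>{1..N}. \<Sum>n\<in>{1..N} - {m}.
            gap lam (int m) powr (2 - 1) * gap lam (int n) powr 1 * t m * t n
            / (lam (int m) - lam (int n))^2)
      = (\<Sum>m\<in>{1..N}. \<Sum>n\<in>{1..N} - {m}. K m n * t m * t n)"
    using gp by (intro sum.cong refl) (simp add: K_def less_imp_le)
  also have "\<dots> \<le> pi^2 / 3 * (\<Sum>n\<in>{1..N}. (t n)^2)"
  proof (rule schur)
    show "\<And>m n. K m n = K n m" by (simp add: K_def power2_commute mult.commute)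
    show "\<And>m n. K m n \<ge> 0" using gp by (simp add: K_def less_imp_le)
    show "\<And>m. m \<in> {1..N} \<Longrightarrow> (\<Sum>n\<in>{1..N} - {m}. K m n) \<le> pi^2 / 3"
      unfolding K_def by (rule row_bound[OF lam])
  qed simp
  finally show "(\<Sum>m\<in>{1..N}. \<Sum>n\<in>{1..N} - {m}.
            gap lam (int m) powr (2 - 1) * gap lam (int n) powr 1 * t m * t n
            / (lam (int m) - lam (int n))^2) \<le> pi^2 / 3 * (\<Sum>n\<in>{1..N}. (t n)^2)" .
qed



definition H :: "nat \<Rightarrow> real" where "H K = (\<Sum>i<K. 1 / (real i + 1)^2)"

lemma H_nonneg: "H K \<ge> 0" unfolding H_def by (intro sum_nonneg) auto

lemma partA: "(\<Sum>n\<in>{Suc m..m+K}. 1 / (real m - real n)^2) = H K"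
proof -
  have im: "{Suc m..m+K} = (\<lambda>i. m + i + 1) ` {..<K}"
  proof (rule set_eqI, rule iffI)
    fix n assume "n \<in> {Suc m..m+K}"
    then have "n = m + (n - m - 1) + 1" "n - m - 1 < K" by auto
    then show "n \<in> (\<lambda>i. m + i + 1) ` {..<K}" by blast
  qed auto
  have "(\<Sum>n\<in>{Suc m..m+K}. 1 / (real m - real n)^2) = (\<Sum>i<K. 1 / (real m - real (m + i + 1))^2)"
    unfolding im by (subst sum.reindex) (auto simp: inj_on_def)
  also have "\<dots> = H K" unfolding H_def
  proof (rule sum.cong[OF refl])
    fix i
    have "real m - real (m + i + 1) = - (real i + 1)" by simp
    then have "(real m - real (m + i + 1))^2 = (real i + 1)^2" by (simp only: power2_minus)
    then show "1 / (real m - real (m + i + 1))^2 = 1 / (real i + 1)^2" by simp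
  qed
  finally show ?thesis .
qed

lemma partB:
  assumes "K < m"
  shows "(\<Sum>n\<in>{m-K..<m}. 1 / (real m - real n)^2) = H K"
proof -
  obtain p where p: "m = p + K" using assms by (metis add.commute less_imp_add_positive)
  have im: "{m-K..<m} = (\<lambda>i. p + K - i - 1) ` {..<K}"
  proof (rule set_eqI, rule iffI)
    fix n assume "n \<in> {m-K..<m}"
    then have "n = p + K - (p + K - n - 1) - 1" "p + K - n - 1 < K" using p by auto
    then show "n \<in> (\<lambda>i. p + K - i - 1) ` {..<K}" by blast
  qed (use p in auto)
  have "(\<Sum>n\<in>{m-K..<m}. 1 / (real m - real n)^2) = (\<Sum>i<K. 1 / (real m - real (p + K - i - 1))^2)"
    unfolding im by (subst sum.reindex) (auto simp: inj_on_def)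
  also have "\<dots> = H K" unfolding H_def
  proof (rule sum.cong[OF refl])
    fix i assume "i \<in> {..<K}"
    then have "real (p + K - i - 1) = real p + real K - real i - 1" by (simp add: of_nat_diff)
    then have "real m - real (p + K - i - 1) = real i + 1" using p by simp
    then show "1 / (real m - real (p + K - i - 1))^2 = 1 / (real i + 1)^2" by simp
  qed
  finally show ?thesis .
qed

lemma middle:
  assumes "K < m" "m + K \<le> N"
  shows "2 * H K \<le> (\<Sum>n\<in>{1..N} - {m}. 1 / (real m - real n)^2)"
proof -
  have d: "{m-K..<m} \<inter> {Suc m..m+K} = {}" by auto
  have "2 * H K = (\<Sum>n\<in>{m-K..<m} \<union> {Suc m..m+K}. 1 / (real m - real n)^2)"
    using partA[of m K] partB[OF assms(1)] by (subst sum.union_disjoint[OF _ _ d]) auto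
  also have "\<dots> \<le> (\<Sum>n\<in>{1..N} - {m}. 1 / (real m - real n)^2)"
  proof (rule sum_mono2)
    show "{m-K..<m} \<union> {Suc m..m+K} \<subseteq> {1..N} - {m}" using assms by auto
  qed auto
  finally show ?thesis .
qed

lemma lower_K:
  assumes adm: "admissible_const 1 C"
  shows "2 * H K \<le> C"
proof -
  define lam :: "int \<Rightarrow> real" where "lam k = real_of_int k" for k
  have sm: "strict_mono lam" by (simp add: strict_mono_def lam_def)
  have g: "gap lam k = 1" for k by (simp add: gap_def lam_def)
  have bound: "real (N - 2*K) * (2 * H K) \<le> C * real N" if N: "N \<ge> 2*K + 1" for N
  proof -
    have 0: "(\<Sum>m\<in>{1..N}. \<Sum>n\<in>{1..N} - {m}.
            gap lam (int m) powr (2 - 1) * gap lam (int n) powr 1 * 1 * 1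
            / (lam (int m) - lam (int n))^2) \<le> C * (\<Sum>n\<in>{1..N}. 1^2)"
      by (rule adm[unfolded admissible_const_def, rule_format, of N lam "\<lambda>_. 1"])
         (use N sm in auto)
    then have 1: "(\<Sum>m\<in>{1..N}. \<Sum>n\<in>{1..N} - {m}. 1 / (real m - real n)^2) \<le> C * real N"
      by (simp add: g lam_def)
    have "real (N - 2*K) * (2 * H K) = (\<Sum>m\<in>{K+1..N-K}. 2 * H K)"
      using N by simp
    also have "\<dots> \<le> (\<Sum>m\<in>{K+1..N-K}. \<Sum>n\<in>{1..N} - {m}. 1 / (real m - real n)^2)"
      by (intro sum_mono middle) auto
    also have "\<dots> \<le> (\<Sum>m\<in>{1..N}. \<Sum>n\<in>{1..N} - {m}. 1 / (real m - real n)^2)"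
      by (intro sum_mono2 sum_nonneg) auto
    finally show ?thesis using 1 by simp
  qed
  show ?thesis
  proof (rule ccontr)
    assume "\<not> 2 * H K \<le> C"
    then have eps: "2 * H K - C > 0" by simp
    obtain n :: nat where n: "4 * real K * H K / (2 * H K - C) < real n"
      using reals_Archimedean2 by blast
    define N where "N = n + 2*K + 1"
    have "real (N - 2*K) * (2 * H K) \<le> C * real N" by (rule bound) (simp add: N_def)
    moreover have "real (N - 2*K) = real N - 2 * real K" by (simp add: N_def)
    ultimately have "real N * (2 * H K - C) \<le> 4 * real K * H K" by (simp add: algebra_simps)
    then have "real N \<le> 4 * real K * H K / (2 * H K - C)" using eps by (simp add: field_simps)
    moreover have "real n < real N" by (simp add: N_def)
    ultimately show False using n by simp
  qed
qed

lemma lower: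
  assumes adm: "admissible_const 1 C"
  shows "pi^2 / 3 \<le> C"
proof -
  have "(\<lambda>n. 1 / (real n + 1)^2) sums (pi^2 / 6)"
    using inverse_squares_sums by (simp add: add.commute)
  then have "H \<longlonglongrightarrow> pi^2 / 6" unfolding sums_def H_def[abs_def] .
  then have "pi^2 / 6 \<le> C / 2"
    by (rule LIMSEQ_le_const2) (use lower_K[OF adm] in \<open>auto simp: mult.commute\<close>)
  then show ?thesis by simp
qed

theorem theorem4:
  shows "Cbar 1 = ereal (pi^2 / 3)"
  unfolding Cbar_def
proof (rule antisym)
  show "Inf (ereal ` {C. admissible_const 1 C}) \<le> ereal (pi^2 / 3)"
    by (rule Inf_lower) (use upper in auto)
  show "ereal (pi^2 / 3) \<le> Inf (ereal ` {C. admissible_const 1 C})"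
    by (rule Inf_greatest) (use lower in auto)
qed

end
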